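(* Let $U=2^J\cdot3^3$ with $5\le J\ll1$ and $W=U\prod_{5\le p\le w}p$ with $10^{10^{10}}\le w\ll1$, let $b$ be an integer such that $Wn+b$ is amenable, let $Q\ge1$, and let $\mathcal{Q}=\{c_0\bmod Q:\ (Wc_0+b,Q)=(Wc_0+b-1,s(Q))=1\}$. Let $a$ and $q\mid Q$ be positive integers with $(a,q)=1$ and $q\ne1$. Then $$\Bigg|\sum_{c_0\in\mathcal{Q}}e\Big(\frac aqc_0\Big)\Bigg|\le w^{-1/2}|\mathcal{Q}|.$$
   Context: $e(t)=e^{2\pi it}$. $s(n)=\prod_{p\mid n,\ p\equiv-1\ (4),\ p\ne3}p$. A linear polynomial $Kn+b$ ($K\ge1$) is amenable if (i) $6^3\mid K$; (ii) $(b,K)=(b-1,s(K))=1$; (iii) $b-1=2^j3^{2t}(4h+1)$ for some $h\in\mathbb{Z}$ with $3\nmid4h+1$ and $j,t\ge0$ with $2^{j+2}3^{2t+1}\mid K$. *)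

theory Defs
  imports "HOL-Analysis.Analysis"
begin

definition e :: "real \<Rightarrow> complex" where
  "e t = exp (2 * pi * \<i> * complex_of_real t)"

definition s :: "nat \<Rightarrow> nat" where
  "s n = (\<Prod>p\<in>{p. prime p \<and> p dvd n \<and> p mod 4 = 3 \<and> p \<noteq> 3}. p)"

text \<open>The linear polynomial K n + b is amenable\<close>
definition amenable :: "nat \<Rightarrow> int \<Rightarrow> bool" where
  "amenable K b \<longleftrightarrow> K \<ge> 1 \<and> (6::nat)^3 dvd K \<and>
     coprime b (int K) \<and> coprime (b - 1) (int (s K)) \<and>
     (\<exists>h::int. \<exists>j t::nat. b - 1 = 2^j * 3^(2*t) * (4*h + 1) \<and> \<not> (3 dvd (4*h + 1))
        \<and> (2::nat)^(j+2) * 3^(2*t+1) dvd K)"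

definition bigW :: "nat \<Rightarrow> real \<Rightarrow> nat" where
  "bigW J w = 2^J * 3^3 * (\<Prod>p\<in>{p. prime p \<and> 5 \<le> p \<and> real p \<le> w}. p)"

definition resset :: "nat \<Rightarrow> int \<Rightarrow> nat \<Rightarrow> nat set" where
  "resset W b Q = {c0 \<in> {0..<Q}. coprime (int W * int c0 + b) (int Q)
                      \<and> coprime (int W * int c0 + b - 1) (int (s Q))}"

end

theory Submission imports Defs "HOL-Computational_Algebra.Primes" begin

lemma coprime_int_char:
  fixes x :: int and n :: nat
  assumes "n > 0"
  shows "coprime x (int n) \<longleftrightarrow> (\<forall>r. prime r \<longrightarrow> r dvd n \<longrightarrow> \<not> int r dvd x)"
proof
  assume "coprime x (int n)"
  then show "\<forall>r. prime r \<longrightarrow> r dvd n \<longrightarrow> \<not> int r dvd x"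
  proof (intro allI impI notI)
    fix r assume "prime r" "r dvd n" "int r dvd x"
    have "int r dvd int n" using \<open>r dvd n\<close> by simp
    then have "\<bar>int r\<bar> = 1"
      using coprime_common_divisor_int[OF \<open>coprime x (int n)\<close> \<open>int r dvd x\<close>] by blast
    then show False using \<open>prime r\<close> by simp
  qed
next
  assume H: "\<forall>r. prime r \<longrightarrow> r dvd n \<longrightarrow> \<not> int r dvd x"
  show "coprime x (int n)"
  proof (rule ccontr)
    assume "\<not> coprime x (int n)"
    then have "gcd x (int n) \<noteq> 1" by (simp add: coprime_iff_gcd_eq_1)
    moreover have "gcd x (int n) \<ge> 0" by simp
    ultimately have "\<bar>gcd x (int n)\<bar> \<noteq> 1" by simp
    then obtain r where r: "prime r" "r dvd gcd x (int n)" using prime_factor_int by blast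
    then have "r \<ge> 0" using prime_ge_0_int by blast
    then obtain m where m: "r = int m" using nonneg_int_cases by blast
    have "int m dvd x" "int m dvd int n" using r m by (auto intro: dvd_trans)
    then have "m dvd n" "prime m" using r m by auto
    then show False using H \<open>int m dvd x\<close> by blast
  qed
qed

lemma s_prime_dvd:
  assumes "n > 0" "prime r"
  shows "r dvd s n \<longleftrightarrow> r dvd n \<and> r mod 4 = 3 \<and> r \<noteq> 3"
proof -
  have fin: "finite {p. prime p \<and> p dvd n \<and> p mod 4 = 3 \<and> p \<noteq> 3}"
  proof (rule finite_subset[of _ "{..n}"])
    show "{p. prime p \<and> p dvd n \<and> p mod 4 = 3 \<and> p \<noteq> 3} \<subseteq> {..n}"
      using assms(1) dvd_imp_le by blast
  qed simp
  have "r dvd s n \<longleftrightarrow> (\<exists>x\<in>{p. prime p \<and> p dvd n \<and> p mod 4 = 3 \<and> p \<noteq> 3}. r dvd x)"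
    unfolding s_def by (rule prime_dvd_prod_iff[OF fin assms(2)])
  also have "\<dots> \<longleftrightarrow> r dvd n \<and> r mod 4 = 3 \<and> r \<noteq> 3"
  proof
    assume "\<exists>x\<in>{p. prime p \<and> p dvd n \<and> p mod 4 = 3 \<and> p \<noteq> 3}. r dvd x"
    then obtain x where x: "prime x" "x dvd n" "x mod 4 = 3" "x \<noteq> 3" "r dvd x" by blast
    then have "r = x" using primes_dvd_imp_eq[OF assms(2) x(1)] by simp
    then show "r dvd n \<and> r mod 4 = 3 \<and> r \<noteq> 3" using x by simp
  next
    assume "r dvd n \<and> r mod 4 = 3 \<and> r \<noteq> 3"
    then have "r \<in> {p. prime p \<and> p dvd n \<and> p mod 4 = 3 \<and> p \<noteq> 3}" using assms(2) by simp
    then show "\<exists>x\<in>{p. prime p \<and> p dvd n \<and> p mod 4 = 3 \<and> p \<noteq> 3}. r dvd x"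
      using dvd_refl by blast
  qed
  finally show ?thesis .
qed


lemma e_add: "e (x + y) = e x * e y"
  unfolding e_def by (simp add: distrib_left exp_add)

lemma e_int: "e (of_int n) = 1"
proof -
  have "complex_of_real (2 * pi) * \<i> * complex_of_real (real_of_int n) = \<i> * (of_int n * (of_real pi * 2))"
    by simp
  then show ?thesis unfolding e_def by (simp only: exp_2pi_1_int of_real_mult of_real_numeral)
qed

lemma norm_e: "cmod (e x) = 1"
  unfolding e_def by (simp add: norm_exp)

lemma e_eq_1: "e x = 1 \<Longrightarrow> x \<in> \<int>"
  unfolding e_def exp_eq_1
  by (auto simp: Ints_def)

lemma cong_shift:
  fixes W Q c u r :: nat and b :: int
  assumes "r dvd Q"
  shows "int r dvd (int W * int ((c+u) mod Q) + b) - (int W * int c + b) - int W * int u"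
proof -
  have h: "Q * ((c+u) div Q) + (c+u) mod Q = c + u" by (rule mult_div_mod_eq)
  have "int (Q * ((c+u) div Q) + (c+u) mod Q) = int (c + u)" by (simp only: h)
  then have "int Q * int ((c+u) div Q) + int ((c+u) mod Q) = int c + int u"
    by (simp only: of_nat_add of_nat_mult)
  then have "int ((c+u) mod Q) = int c + int u - int Q * int ((c+u) div Q)"
    by linarith
  then have "(int W * int ((c+u) mod Q) + b) - (int W * int c + b) - int W * int u
      = int Q * (- int W * int ((c+u) div Q))" by (subst \<open>int ((c+u) mod Q) = _\<close>) (simp add: algebra_simps)
  then show ?thesis using assms by simp
qed

definition Pg :: "nat \<Rightarrow> int \<Rightarrow> nat \<Rightarrow> nat \<Rightarrow> bool" where
  "Pg W b r c \<longleftrightarrow> \<not> int r dvd (int W * int c + b) \<and>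
     ((r mod 4 = 3 \<and> r \<noteq> 3) \<longrightarrow> \<not> int r dvd (int W * int c + b - 1))"

lemma resset_char:
  assumes "Q > 0"
  shows "resset W b Q = {c \<in> {0..<Q}. \<forall>r. prime r \<and> r dvd Q \<longrightarrow> Pg W b r c}"
proof -
  have sQ: "s Q > 0"
    unfolding s_def by (rule prod_pos) (auto simp: prime_gt_0_nat)
  have A: "coprime (int W * int c + b - 1) (int (s Q)) \<longleftrightarrow>
        (\<forall>r. prime r \<and> r dvd Q \<and> r mod 4 = 3 \<and> r \<noteq> 3 \<longrightarrow> \<not> int r dvd (int W * int c + b - 1))" for c
  proof -
    have "coprime (int W * int c + b - 1) (int (s Q)) \<longleftrightarrow>
        (\<forall>r. prime r \<longrightarrow> r dvd s Q \<longrightarrow> \<not> int r dvd (int W * int c + b - 1))"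
      by (rule coprime_int_char[OF sQ])
    also have "\<dots> \<longleftrightarrow> (\<forall>r. prime r \<and> r dvd Q \<and> r mod 4 = 3 \<and> r \<noteq> 3 \<longrightarrow> \<not> int r dvd (int W * int c + b - 1))"
      using s_prime_dvd[OF assms] by meson
    finally show ?thesis .
  qed
  have B: "coprime (int W * int c + b) (int Q) \<longleftrightarrow>
        (\<forall>r. prime r \<longrightarrow> r dvd Q \<longrightarrow> \<not> int r dvd (int W * int c + b))" for c
    by (rule coprime_int_char[OF assms])
  have C: "(coprime (int W * int c + b) (int Q) \<and> coprime (int W * int c + b - 1) (int (s Q)))
      \<longleftrightarrow> (\<forall>r. prime r \<and> r dvd Q \<longrightarrow> Pg W b r c)" for c
    unfolding A B Pg_def by blast
  show ?thesis unfolding resset_def using C by blast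
qed

lemma Pg_shift:
  assumes "r dvd Q" "int r dvd int W * int u"
  shows "Pg W b r ((c+u) mod Q) \<longleftrightarrow> Pg W b r c"
proof -
  define X' where "X' = int W * int ((c+u) mod Q) + b"
  define X where "X = int W * int c + b"
  have "int r dvd (X' - X - int W * int u) + int W * int u"
    using cong_shift[OF assms(1), of W c u b] assms(2) unfolding X'_def X_def by (rule dvd_add)
  then have d: "int r dvd X' - X" by simp
  have 1: "int r dvd X' \<longleftrightarrow> int r dvd X"
    using dvd_add_left_iff[OF d, of X] by simp
  have e2: "(X - 1) + (X' - X) = X' - 1" by simp
  have 2: "int r dvd X' - 1 \<longleftrightarrow> int r dvd X - 1"
    using dvd_add_left_iff[OF d, of "X - 1"] unfolding e2 .
  show ?thesis unfolding Pg_def using 1 2 unfolding X'_def X_def by blast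
qed

lemma shift_bij:
  fixes A :: "nat set"
  assumes "A \<subseteq> {0..<Q}" "Q > 0" "\<And>c. c < Q \<Longrightarrow> ((c+t) mod Q \<in> A \<longleftrightarrow> c \<in> A)"
  shows "bij_betw (\<lambda>c. (c+t) mod Q) A A"
proof -
  have fin: "finite A" using assms(1) finite_subset by blast
  have "(\<lambda>c. (c+t) mod Q) ` A = A"
  proof
    show "(\<lambda>c. (c+t) mod Q) ` A \<subseteq> A"
      using assms by auto
    show "A \<subseteq> (\<lambda>c. (c+t) mod Q) ` A"
    proof
      fix d assume d: "d \<in> A"
      define c where "c = (d + (Q - t mod Q)) mod Q"
      have "c < Q" using assms(2) by (simp add: c_def)
      have "(c + t) mod Q = d"
      proof -
        have "(c + t) mod Q = (d + (Q - t mod Q) + t) mod Q" by (simp add: c_def mod_add_left_eq)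
        also have "d + (Q - t mod Q) + t = d + Q + Q * (t div Q)"
          using assms(2) mod_less_divisor[of Q t] mult_div_mod_eq[of Q t] by linarith
        also have "(d + Q + Q * (t div Q)) mod Q = d" using d assms(1) by auto
        finally show ?thesis .
      qed
      then have "c \<in> A" using assms(3)[OF \<open>c < Q\<close>] d by simp
      then show "d \<in> (\<lambda>c. (c+t) mod Q) ` A" using \<open>(c + t) mod Q = d\<close> by (rule rev_image_eqI[OF _ sym])
    qed
  qed
  then show ?thesis using finite_surj_inj[OF fin] by (simp add: bij_betw_def)
qed

lemma sum_zero:
  fixes A :: "nat set" and a q Q t :: nat
  assumes "A \<subseteq> {0..<Q}" "Q > 0" "q dvd Q" "q > 0"
    "\<And>c. c < Q \<Longrightarrow> ((c+t) mod Q \<in> A \<longleftrightarrow> c \<in> A)" "\<not> q dvd a*t"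
  shows "(\<Sum>c\<in>A. e (real a / real q * real c)) = 0"
proof -
  define f where "f = (\<lambda>c::nat. e (real a / real q * real c))"
  define g where "g = (\<lambda>c. (c+t) mod Q)"
  define z where "z = e (real a / real q * real t)"
  have bij: "bij_betw g A A" unfolding g_def by (rule shift_bij[OF assms(1,2,5)])
  have per: "f (g c) = z * f c" for c
  proof -
    obtain k where k: "Q = q * k" using assms(3) by blast
    have h: "Q * ((c+t) div Q) + (c+t) mod Q = c + t" by (rule mult_div_mod_eq)
    have "real (Q * ((c+t) div Q) + (c+t) mod Q) = real (c + t)" by (simp only: h)
    then have "real Q * real ((c+t) div Q) + real ((c+t) mod Q) = real c + real t"
      by (simp only: of_nat_add of_nat_mult)
    then have h2: "real ((c+t) mod Q) = real c + real t - real q * real k * real ((c+t) div Q)"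
      unfolding k by simp
    have "real a / real q * real ((c+t) mod Q) =
        real a / real q * real c + real a / real q * real t + of_int (- int (a * k * ((c+t) div Q)))"
      unfolding h2 using assms(4) by (simp add: field_simps)
    moreover have eint: "e (of_int (- int (a * k * ((c+t) div Q)))) = 1" by (rule e_int)
    ultimately have "e (real a / real q * real ((c+t) mod Q)) = e (real a / real q * real c) * e (real a / real q * real t) * 1"
      by (simp only: e_add)
    then show ?thesis unfolding f_def g_def z_def by (simp add: ac_simps)
  qed
  have "(\<Sum>c\<in>A. f c) = (\<Sum>c\<in>A. f (g c))" using sum.reindex_bij_betw[OF bij, of f] by simp
  also have "\<dots> = z * (\<Sum>c\<in>A. f c)" by (simp add: per sum_distrib_left)
  finally have eq: "(\<Sum>c\<in>A. f c) = z * (\<Sum>c\<in>A. f c)" .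
  have "z \<noteq> 1"
  proof
    assume "z = 1"
    then have "real a / real q * real t \<in> \<int>" unfolding z_def by (rule e_eq_1)
    then obtain n where n: "real a / real q * real t = of_int n" by (auto elim: Ints_cases)
    then have "real (a*t) = real q * of_int n" using assms(4) by (simp add: field_simps)
    then have "real_of_int (int (a*t)) = real_of_int (int q * n)" by simp
    then have "int (a*t) = int q * n" by (simp only: of_int_eq_iff)
    then have "int q dvd int (a*t)" by simp
    then show False using assms(6) by (simp only: int_dvd_int_iff)
  qed
  then show ?thesis using eq unfolding f_def
    by (metis mult_cancel_right1 mult.commute)
qed

lemma at_most_one:
  fixes p :: nat and Y Z :: int
  assumes "prime p" "\<not> int p dvd Y"
  shows "card {j \<in> {..<p}. int p dvd Z + int j * Y} \<le> 1"
proof -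
  have "j1 = j2" if "j1 \<in> {j \<in> {..<p}. int p dvd Z + int j * Y}" "j2 \<in> {j \<in> {..<p}. int p dvd Z + int j * Y}" for j1 j2
  proof -
    have "int p dvd (Z + int j1 * Y) - (Z + int j2 * Y)" using that dvd_diff[of "int p" "Z + int j1 * Y" "Z + int j2 * Y"] by simp
    then have "int p dvd (int j1 - int j2) * Y" by (simp add: algebra_simps)
    moreover have "prime (int p)" using assms(1) by simp
    ultimately have d: "int p dvd (int j1 - int j2)" using assms(2) prime_dvd_mult_iff by blast
    show "j1 = j2"
    proof (rule ccontr)
      assume "j1 \<noteq> j2"
      then have "int j1 - int j2 \<noteq> 0" by simp
      then have "\<bar>int p\<bar> \<le> \<bar>int j1 - int j2\<bar>" using d dvd_imp_le_int by blast
      then show False using that by auto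
    qed
  qed
  note uniq = this
  have fin: "finite {j \<in> {..<p}. int p dvd Z + int j * Y}" by simp
  have "card {j \<in> {..<p}. int p dvd Z + int j * Y} \<le> Suc 0"
    using card_le_Suc0_iff_eq[OF fin] uniq by blast
  then show ?thesis by simp
qed

theorem lemma4:
  fixes J Q a q :: nat and w :: real and b :: int
  assumes "5 \<le> J"
    and "(10::real) ^ (10 ^ 10) \<le> w"
    and "amenable (bigW J w) b"
    and "Q \<ge> 1"
    and "a > 0" and "q > 0" and "q dvd Q" and "coprime a q" and "q \<noteq> 1"
  shows "cmod (\<Sum>c0\<in>resset (bigW J w) b Q. e (real a / real q * real c0))
           \<le> w powr (-1/2) * real (card (resset (bigW J w) b Q))"
proof -
  define W where "W = bigW J w"
  define S where "S = resset W b Q"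
  define f where "f = (\<lambda>c::nat. e (real a / real q * real c))"
  have Q0: "Q > 0" using assms(4) by simp
  have Schar: "S = {c \<in> {0..<Q}. \<forall>r. prime r \<and> r dvd Q \<longrightarrow> Pg W b r c}"
    unfolding S_def by (rule resset_char[OF Q0])
  have SQ: "S \<subseteq> {0..<Q}" unfolding Schar by blast
  have finS: "finite S" using SQ finite_subset by blast
  have w16: "16 \<le> w"
  proof -
    have "(10::real)^2 \<le> 10^(10^10)" by (rule power_increasing) simp_all
    moreover have "(16::real) \<le> 10^2" by simp
    ultimately show ?thesis using assms(2) by linarith
  qed
  obtain p where p: "prime p" "p dvd q" using prime_factor_nat[OF assms(9)] by blast
  have pQ: "p dvd Q" using p(2) assms(7) by (rule dvd_trans)
  have p0: "p > 0" using p(1) prime_gt_0_nat by blast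
  define B where "B = {r. prime r \<and> r dvd Q \<and> \<not> r dvd W}"
  have finB: "finite B"
  proof (rule finite_subset[of _ "{..Q}"])
    show "B \<subseteq> {..Q}" unfolding B_def using Q0 dvd_imp_le by blast
  qed simp
  define N where "N = (\<Prod>r\<in>B - {p}. r)"
  define t where "t = q div p * N"
  have rN: "r dvd N" if "r \<in> B - {p}" for r
    unfolding N_def using finB that by (intro dvd_prodI) auto
  have pN: "\<not> p dvd N"
  proof
    assume "p dvd N"
    then obtain r where r: "r \<in> B - {p}" "p dvd r"
      using prime_dvd_prod_iff[of "B - {p}" p "\<lambda>r. r"] finB p(1) unfolding N_def by blast
    then have "prime r" unfolding B_def by blast
    then have "p = r" using primes_dvd_imp_eq[OF p(1)] r(2) by blast
    then show False using r(1) by blast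
  qed
  have qp: "q = q div p * p" using p(2) by simp
  have qp0: "q div p > 0" using qp assms(6) by (metis gr0I mult_0)
  have qt: "\<not> q dvd a * t"
  proof
    assume "q dvd a * t"
    then have "q dvd t" using assms(8) by (metis coprime_commute coprime_dvd_mult_right_iff)
    then have "q div p * p dvd q div p * N" using qp unfolding t_def by simp
    then have "p dvd N" using qp0 by simp
    then show False using pN by blast
  qed
  have other: "r dvd W * t" if "prime r" "r dvd Q" "r \<noteq> p" for r
  proof (cases "r dvd W")
    case True then show ?thesis by simp
  next
    case False
    then have "r \<in> B - {p}" unfolding B_def using that by blast
    then have "r dvd t" unfolding t_def using rN by simp
    then show ?thesis by simp
  qed
  have intdvd: "int r dvd int W * int u" if "r dvd W * u" for r u
    using that by (simp only: int_dvd_int_iff of_nat_mult[symmetric])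
  show ?thesis
  proof (cases "p dvd W \<or> p^2 dvd q")
    case True
    have all: "r dvd W * t" if "prime r" "r dvd Q" for r
    proof (cases "r = p")
      case False then show ?thesis using other that by blast
    next
      case rp: True
      show ?thesis
      proof (cases "p dvd W")
        case True then show ?thesis using rp by simp
      next
        case False
        then have "p^2 dvd q" using \<open>p dvd W \<or> p^2 dvd q\<close> by blast
        then obtain k where "q = p^2 * k" by blast
        then have "q div p = p * k" using p0 by (simp add: power2_eq_square)
        then have "p dvd t" unfolding t_def by simp
        then show ?thesis using rp by simp
      qed
    qed
    have inv: "((c+t) mod Q \<in> S \<longleftrightarrow> c \<in> S)" if "c < Q" for c
    proof -
      have "Pg W b r ((c+t) mod Q) \<longleftrightarrow> Pg W b r c" if "prime r" "r dvd Q" for r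
        using Pg_shift[OF that(2) intdvd[OF all[OF that]]] .
      then show ?thesis unfolding Schar using that Q0 by auto
    qed
    have "(\<Sum>c\<in>S. f c) = 0" unfolding f_def
      by (rule sum_zero[OF SQ Q0 assms(7) assms(6) inv qt])
    then show ?thesis unfolding f_def S_def W_def by simp
  next
    case False
    then have pW: "\<not> p dvd W" and pq2: "\<not> p^2 dvd q" by auto
    have pt: "\<not> p dvd t"
    proof
      assume "p dvd t"
      then have "p dvd q div p" using pN p(1) prime_dvd_mult_iff unfolding t_def by blast
      then obtain k where "q div p = p * k" by blast
      then have "q = p^2 * k" using qp by (simp add: power2_eq_square ac_simps)
      then show False using pq2 by simp
    qed
    have pWt: "\<not> int p dvd int W * int t"
    proof
      assume "int p dvd int W * int t"
      then have "p dvd W * t" by (simp only: int_dvd_int_iff of_nat_mult[symmetric])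
      then show False using pW pt p(1) prime_dvd_mult_iff by blast
    qed
    define T where "T = {c \<in> {0..<Q}. \<forall>r. prime r \<and> r dvd Q \<and> r \<noteq> p \<longrightarrow> Pg W b r c}"
    have TQ: "T \<subseteq> {0..<Q}" unfolding T_def by blast
    have finT: "finite T" using TQ finite_subset by blast
    have ST: "S = {c \<in> T. Pg W b p c}" unfolding Schar T_def using p(1) pQ by blast
    have SsubT: "S \<subseteq> T" unfolding ST by blast
    define Bd where "Bd = T - S"
    have invT: "((c + j*t) mod Q \<in> T \<longleftrightarrow> c \<in> T)" if "c < Q" for c j
    proof -
      have "Pg W b r ((c+j*t) mod Q) \<longleftrightarrow> Pg W b r c" if "prime r" "r dvd Q" "r \<noteq> p" for r
      proof -
        have "r dvd W * (j * t)" using dvd_mult[OF other[OF that], of j] by (simp add: ac_simps)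
        then show ?thesis using Pg_shift[OF that(2) intdvd] by blast
      qed
      then show ?thesis unfolding T_def using that Q0 by auto
    qed
    have sumT: "(\<Sum>c\<in>T. f c) = 0" unfolding f_def
      by (rule sum_zero[OF TQ Q0 assms(7) assms(6) _ qt]) (use invT[of _ 1] in simp)
    have "(\<Sum>c\<in>T. f c) = (\<Sum>c\<in>T - S. f c) + (\<Sum>c\<in>S. f c)"
      using sum.subset_diff[OF SsubT finT] .
    then have sumS: "(\<Sum>c\<in>S. f c) = - (\<Sum>c\<in>Bd. f c)" using sumT unfolding Bd_def
      by (simp add: eq_neg_iff_add_eq_0 add.commute)
    have finBd: "finite Bd" unfolding Bd_def using finT by simp
    have normS: "cmod (\<Sum>c\<in>S. f c) \<le> real (card Bd)"
    proof -
      have "cmod (\<Sum>c\<in>S. f c) = cmod (\<Sum>c\<in>Bd. f c)" using sumS by simp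
      also have "\<dots> \<le> (\<Sum>c\<in>Bd. cmod (f c))" by (rule norm_sum)
      also have "\<dots> = real (card Bd)" unfolding f_def by (simp add: norm_e)
      finally show ?thesis .
    qed
    have cardT: "card T = card S + card Bd"
      unfolding Bd_def using card_Diff_subset[OF finite_subset[OF SsubT finT] SsubT]
        card_mono[OF finT SsubT] by simp
    have count: "p * card Bd \<le> 2 * card T"
    proof -
      define \<phi> where "\<phi> = (\<lambda>j c. (c + j*t) mod Q)"
      have bijj: "bij_betw (\<phi> j) T T" for j
        unfolding \<phi>_def by (rule shift_bij[OF TQ Q0]) (rule invT)
      have ind: "(\<Sum>c\<in>T. (if \<phi> j c \<in> Bd then 1 else 0::nat)) = card Bd" for j
      proof -
        have "(\<Sum>c\<in>T. (if \<phi> j c \<in> Bd then 1 else 0::nat)) = (\<Sum>c\<in>T. (if c \<in> Bd then 1 else 0::nat))"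
          using sum.reindex_bij_betw[OF bijj, of "\<lambda>d. if d \<in> Bd then 1 else 0::nat"] by simp
        also have "\<dots> = card (T \<inter> Bd)" using sum.inter_restrict[OF finT, of "\<lambda>_. 1::nat" Bd] by simp
        also have "T \<inter> Bd = Bd" unfolding Bd_def by blast
        finally show ?thesis .
      qed
      have inner: "(\<Sum>j<p. (if \<phi> j c \<in> Bd then 1 else 0::nat)) \<le> 2" if "c \<in> T" for c
      proof -
        define X where "X = int W * int c + b"
        define Y where "Y = int W * int t"
        have e1: "(\<Sum>j<p. (if \<phi> j c \<in> Bd then 1 else 0::nat)) = card ({..<p} \<inter> {j. \<phi> j c \<in> Bd})"
          using sum.inter_restrict[of "{..<p}" "\<lambda>_. 1::nat" "{j. \<phi> j c \<in> Bd}"] by simp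
        have sub: "{..<p} \<inter> {j. \<phi> j c \<in> Bd} \<subseteq> {j \<in> {..<p}. int p dvd X + int j * Y} \<union> {j \<in> {..<p}. int p dvd (X - 1) + int j * Y}"
        proof
          fix j assume j: "j \<in> {..<p} \<inter> {j. \<phi> j c \<in> Bd}"
          have "\<phi> j c \<in> T" "\<phi> j c \<notin> S" using j unfolding Bd_def by auto
          then have "\<not> Pg W b p (\<phi> j c)" unfolding ST by blast
          then have d: "int p dvd int W * int (\<phi> j c) + b \<or> int p dvd int W * int (\<phi> j c) + b - 1"
            unfolding Pg_def by blast
          define D where "D = int W * int (\<phi> j c) + b"
          have cs: "int p dvd D - X - int j * Y"
            using cong_shift[OF pQ, of W c "j*t" b] unfolding \<phi>_def X_def Y_def D_def by (simp add: ac_simps)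
          have e2: "(X + int j * Y) + (D - X - int j * Y) = D" by simp
          have e3: "((X - 1) + int j * Y) + (D - X - int j * Y) = D - 1" by simp
          have 1: "int p dvd D \<longleftrightarrow> int p dvd X + int j * Y"
            using dvd_add_left_iff[OF cs, of "X + int j * Y"] unfolding e2 .
          have 2: "int p dvd D - 1 \<longleftrightarrow> int p dvd (X - 1) + int j * Y"
            using dvd_add_left_iff[OF cs, of "(X - 1) + int j * Y"] unfolding e3 .
          show "j \<in> {j \<in> {..<p}. int p dvd X + int j * Y} \<union> {j \<in> {..<p}. int p dvd (X - 1) + int j * Y}"
            using d 1 2 j unfolding D_def by blast
        qed
        have "card ({..<p} \<inter> {j. \<phi> j c \<in> Bd}) \<le> card ({j \<in> {..<p}. int p dvd X + int j * Y} \<union> {j \<in> {..<p}. int p dvd (X - 1) + int j * Y})"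
          by (rule card_mono[OF _ sub]) simp
        also have "\<dots> \<le> card {j \<in> {..<p}. int p dvd X + int j * Y} + card {j \<in> {..<p}. int p dvd (X - 1) + int j * Y}"
          by (rule card_Un_le)
        also have "\<dots> \<le> 1 + 1"
          using at_most_one[OF p(1), of Y X] at_most_one[OF p(1), of Y "X - 1"] pWt unfolding Y_def by linarith
        finally show ?thesis using e1 by simp
      qed
      have "p * card Bd = (\<Sum>j<p. \<Sum>c\<in>T. (if \<phi> j c \<in> Bd then 1 else 0::nat))" by (simp add: ind)
      also have "\<dots> = (\<Sum>c\<in>T. \<Sum>j<p. (if \<phi> j c \<in> Bd then 1 else 0::nat))" by (rule sum.swap)
      also have "\<dots> \<le> (\<Sum>c\<in>T. 2)" by (rule sum_mono) (rule inner)
      also have "\<dots> = 2 * card T" by simp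
      finally show ?thesis .
    qed
    have pw: "w < real p"
    proof (rule ccontr)
      assume "\<not> w < real p"
      then have pw': "real p \<le> w" by simp
      have "p dvd W"
      proof -
        have "p = 2 \<or> p = 3 \<or> 5 \<le> p"
        proof -
          have "p \<ge> 2" using p(1) prime_ge_2_nat by blast
          moreover have "p \<noteq> 4"
          proof
            assume "p = 4"
            then have "(2::nat) dvd p" by simp
            then have "2 = (1::nat) \<or> 2 = p" using p(1) unfolding prime_nat_iff by blast
            then show False using \<open>p = 4\<close> by simp
          qed
          ultimately show ?thesis by linarith
        qed
        moreover
        define P where "P = {p. prime p \<and> 5 \<le> p \<and> real p \<le> w}"
        have WP: "W = 2^J * 3^3 * (\<Prod>p\<in>P. p)" unfolding W_def bigW_def P_def by simp
        have finP: "finite P"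
        proof (rule finite_subset[of _ "{..nat \<lceil>w\<rceil>}"])
          show "P \<subseteq> {..nat \<lceil>w\<rceil>}" unfolding P_def by (auto simp: le_nat_iff) linarith
        qed simp
        ultimately show ?thesis
        proof (elim disjE)
          assume "p = 2"
          moreover have "(2::nat) dvd 2^J" using assms(1) by (simp add: dvd_power)
          ultimately show ?thesis unfolding WP by (simp add: dvd_mult2)
        next
          assume "p = 3"
          then show ?thesis unfolding WP by simp
        next
          assume "5 \<le> p"
          then have "p \<in> P" unfolding P_def using p(1) pw' by blast
          then have "p dvd (\<Prod>p\<in>P. p)" using finP by (intro dvd_prodI)
          then show ?thesis unfolding WP by (simp add: dvd_mult)
        qed
      qed
      then show False using pW by blast
    qed
    have final: "real (card Bd) \<le> w powr (-1/2) * real (card S)"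
    proof -
      have s4: "4 \<le> sqrt w" using real_sqrt_le_mono[OF w16] by simp
      have ws: "sqrt w * sqrt w = w" using w16 by simp
      have "4 * sqrt w \<le> sqrt w * sqrt w" by (rule mult_right_mono) (use s4 w16 in simp_all)
      then have s2: "2 * sqrt w \<le> real p - 2" using ws pw s4 by linarith
      have cnt: "real p * real (card Bd) \<le> 2 * real (card S) + 2 * real (card Bd)"
      proof -
        have "real (p * card Bd) \<le> real (2 * card T)" using count by (simp only: of_nat_le_iff)
        then show ?thesis unfolding cardT by simp
      qed
      have "2 * sqrt w * real (card Bd) \<le> (real p - 2) * real (card Bd)"
        by (rule mult_right_mono[OF s2]) simp
      then have A: "real (card Bd) * sqrt w \<le> real (card S)" using cnt by (simp add: algebra_simps)
      have B: "w powr (-1/2) = inverse (sqrt w)"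
        using powr_minus[of w "1/2"] powr_half_sqrt[of w] w16 by simp
      have C: "sqrt w > 0" using s4 by linarith
      have "real (card Bd) \<le> real (card S) / sqrt w" using A C by (simp add: pos_le_divide_eq)
      also have "\<dots> = w powr (-1/2) * real (card S)" unfolding B by (simp add: divide_inverse)
      finally show ?thesis .
    qed
    show ?thesis using normS final unfolding f_def S_def W_def by linarith
  qed
qed

end
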